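(* Let $\Delta_1,\ldots,\Delta_m$ be bounded real intervals with $\Delta_j\cap\Delta_{j+1}=\emptyset$ ($j=1,\ldots,m-1$) and $\sigma_j\in\mathcal{M}(\Delta_j)$ with $\mathrm{Co}(\operatorname{supp}\sigma_j)=\Delta_j$. For each $j=2,\ldots,m$, \[ \widehat{s}_{1,j}(z)+\sum_{i=1}^{j-1}(-1)^{j-i}\,\widehat{s}_{1,i}(z)\,\widehat{s}_{j,i+1}(z)+(-1)^j\widehat{s}_{j,1}(z)\equiv0 \] for all $z\in\mathbb{C}\setminus(\Delta_1\cup\Delta_j)$; that is, $\widehat{s}_{1,j}-\widehat{s}_{1,j-1}\widehat{s}_{j,j}+\widehat{s}_{1,j-2}\widehat{s}_{j,j-1}+\cdots+(-1)^{j-1}\widehat{s}_{1,1}\widehat{s}_{j,2}+(-1)^j\widehat{s}_{j,1}\equiv0$.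
   Context: For a bounded interval $\Delta\subset\mathbb{R}$, $\mathcal{M}(\Delta)$ is the class of finite Borel measures of constant sign whose compact support consists of infinitely many points, is contained in $\mathbb{R}$, and has $\Delta$ as the smallest interval containing it. The Cauchy transform of a measure $s$ is $\widehat{s}(z)=\int\frac{ds(x)}{z-x}$. For $1\le j\le k\le m$: $s_{j,j}=\sigma_j$ and $s_{j,k}=\langle\sigma_j,\sigma_{j+1},\ldots,\sigma_k\rangle$ defined recursively by $ds_{j,k}(x)=\widehat{s}_{j+1,k}(x)\,d\sigma_j(x)$. For $1\le k<j\le m$: $s_{j,k}=\langle\sigma_j,\sigma_{j-1},\ldots,\sigma_k\rangle$ defined recursively by $ds_{j,k}(x)=\widehat{s}_{j-1,k}(x)\,d\sigma_j(x)$ (with $s_{k,k}=\sigma_k$). *)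

theory Defs
  imports "HOL-Analysis.Analysis"
begin

text \<open>A finite Borel measure of constant sign on the real line is represented as
  a sign e (either 1 or -1) times a positive finite Borel measure mu.\<close>

definition meas_support :: "real measure \<Rightarrow> real set" where
  "meas_support M = {x. \<forall>e>0. emeasure M (ball x e) > 0}"

definition in_class_M :: "real measure \<Rightarrow> real set \<Rightarrow> bool" where
  "in_class_M M D \<longleftrightarrow> sets M = sets borel \<and> finite_measure M \<and>
     compact (meas_support M) \<and> infinite (meas_support M) \<and>
     convex hull (meas_support M) = D"

definition cauchy_tr :: "real \<Rightarrow> real measure \<Rightarrow> (real \<Rightarrow> complex) \<Rightarrow> complex \<Rightarrow> complex" where
  "cauchy_tr e M f z = complex_of_real e * (LINT x|M. f x / (z - complex_of_real x))"

text \<open>nik_up e mu j n = Cauchy transform of s_{j,j+n} = <sigma_j,...,sigma_{j+n}>,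
  where sigma_i = e i * mu i.\<close>
fun nik_up :: "(nat \<Rightarrow> real) \<Rightarrow> (nat \<Rightarrow> real measure) \<Rightarrow> nat \<Rightarrow> nat \<Rightarrow> complex \<Rightarrow> complex" where
  "nik_up e mu j 0 z = cauchy_tr (e j) (mu j) (\<lambda>x. 1) z"
| "nik_up e mu j (Suc n) z =
     cauchy_tr (e j) (mu j) (\<lambda>x. nik_up e mu (Suc j) n (complex_of_real x)) z"

text \<open>nik_down e mu j n = Cauchy transform of s_{j,j-n} = <sigma_j,...,sigma_{j-n}> (n \<le> j - 1).\<close>
fun nik_down :: "(nat \<Rightarrow> real) \<Rightarrow> (nat \<Rightarrow> real measure) \<Rightarrow> nat \<Rightarrow> nat \<Rightarrow> complex \<Rightarrow> complex" where
  "nik_down e mu j 0 z = cauchy_tr (e j) (mu j) (\<lambda>x. 1) z"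
| "nik_down e mu j (Suc n) z =
     cauchy_tr (e j) (mu j) (\<lambda>x. nik_down e mu (j - 1) n (complex_of_real x)) z"

definition s_hat :: "(nat \<Rightarrow> real) \<Rightarrow> (nat \<Rightarrow> real measure) \<Rightarrow> nat \<Rightarrow> nat \<Rightarrow> complex \<Rightarrow> complex" where
  "s_hat e mu j k = (if j \<le> k then nik_up e mu j (k - j) else nik_down e mu j (j - k))"

end

theory Submission imports Defs begin

lemma neg_pow_mult: "j > i \<Longrightarrow> (-1::complex) ^ (j - i) * (-1) ^ (j - Suc i) = -1"
proof -
  assume "j > i"
  then have "j - i = Suc (j - Suc i)" by simp
  then show ?thesis by (simp add: power_mult_distrib[symmetric] mult.assoc power2_eq_square[symmetric] power_mult[symmetric])
qed

lemma prod_rev_inv: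
  fixes x :: "nat \<Rightarrow> real"
  shows "(\<Prod>k\<in>{c..<j}. inverse (complex_of_real (x (Suc k) - x k)))
     = (-1) ^ (j - c) * inverse (\<Prod>k\<in>{c..<j}. complex_of_real (x k - x (Suc k)))"
proof -
  have "(\<Prod>k\<in>{c..<j}. inverse (complex_of_real (x (Suc k) - x k))) = (\<Prod>k\<in>{c..<j}. - inverse (complex_of_real (x k - x (Suc k))))"
    by (intro prod.cong) (auto simp: of_real_diff inverse_minus_eq[symmetric])
  also have "\<dots> = (-1) ^ (j - c) * (\<Prod>k\<in>{c..<j}. inverse (complex_of_real (x k - x (Suc k))))"
    by (simp add: prod_uminus)
  also have "(\<Prod>k\<in>{c..<j}. inverse (complex_of_real (x k - x (Suc k)))) = inverse (\<Prod>k\<in>{c..<j}. complex_of_real (x k - x (Suc k)))"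
    using prod_inversef[of "\<lambda>k. complex_of_real (x k - x (Suc k))" "{c..<j}"] by (simp add: comp_def)
  finally show ?thesis .
qed

lemma alg:
  fixes x :: "nat \<Rightarrow> real" and z :: complex and j :: nat
  assumes j: "1 \<le> j" and dk: "\<And>k. 1 \<le> k \<Longrightarrow> k < j \<Longrightarrow> x k \<noteq> x (Suc k)"
    and z1: "z \<noteq> complex_of_real (x 1)" and zj: "z \<noteq> complex_of_real (x j)"
  shows "inverse (z - complex_of_real (x 1)) * (\<Prod>k\<in>{1..<j}. inverse (complex_of_real (x k - x (Suc k))))
    + (\<Sum>i=1..j-1. (-1)^(j-i) * (inverse (z - complex_of_real (x 1)) * (\<Prod>k\<in>{1..<i}. inverse (complex_of_real (x k - x (Suc k)))))
         * (inverse (z - complex_of_real (x j)) * (\<Prod>k\<in>{i+1..<j}. inverse (complex_of_real (x (Suc k) - x k)))))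
    + (-1)^j * (inverse (z - complex_of_real (x j)) * (\<Prod>k\<in>{1..<j}. inverse (complex_of_real (x (Suc k) - x k)))) = 0"
    (is "?T1 + ?S + ?T3 = 0")
proof -
  define d where "d k = complex_of_real (x k - x (Suc k))" for k
  define A where "A = z - complex_of_real (x 1)"
  define Bz where "Bz = z - complex_of_real (x j)"
  define P where "P = (\<Prod>k\<in>{1..<j}. d k)"
  have dnz: "1 \<le> k \<Longrightarrow> k < j \<Longrightarrow> d k \<noteq> 0" for k using dk unfolding d_def by auto
  have A0: "A \<noteq> 0" and B0: "Bz \<noteq> 0" using z1 zj unfolding A_def Bz_def by auto
  have Pnz: "(\<Prod>k\<in>{c..<c'}. d k) \<noteq> 0" if "1 \<le> c" "c' \<le> j" for c c'
    using dnz that by (subst prod_zero_iff) auto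
  have P0: "P \<noteq> 0" unfolding P_def using Pnz j by auto
  define Q where "Q = A * Bz * P"
  have Q0: "Q \<noteq> 0" unfolding Q_def using A0 B0 P0 by simp
  have invprod: "(\<Prod>k\<in>{c..<c'}. inverse (complex_of_real (x k - x (Suc k)))) = inverse (\<Prod>k\<in>{c..<c'}. d k)" for c c'
    using prod_inversef[of d "{c..<c'}"] by (simp add: comp_def d_def)
  have revprod: "(\<Prod>k\<in>{c..<j}. inverse (complex_of_real (x (Suc k) - x k))) = (-1) ^ (j - c) * inverse (\<Prod>k\<in>{c..<j}. d k)" for c
    using prod_rev_inv[of x c j] unfolding d_def .
  have t1: "?T1 * Q = Bz"
    unfolding invprod Q_def P_def[symmetric] A_def[symmetric] using A0 P0 by (simp add: field_simps)
  have t3: "?T3 * Q = - A"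
  proof -
    have e: "?T3 = ((-1)^j * (-1)^(j-1)) * inverse Bz * inverse P"
      unfolding revprod Bz_def[symmetric] P_def[symmetric] by simp
    have s: "(-1::complex)^j * (-1)^(j-1) = -1" using neg_pow_mult[of 0 j] j by simp
    have "?T3 * Q = (-1) * inverse Bz * inverse P * (A * Bz * P)" unfolding e s Q_def ..
    then show ?thesis using B0 P0 by (simp add: field_simps)
  qed
  have ti: "((-1)^(j-i) * (inverse A * (\<Prod>k\<in>{1..<i}. inverse (complex_of_real (x k - x (Suc k)))))
         * (inverse Bz * (\<Prod>k\<in>{i+1..<j}. inverse (complex_of_real (x (Suc k) - x k))))) * Q = - d i"
    if i: "i \<in> {1..j-1}" for i
  proof -
    have i1: "1 \<le> i" "i < j" using i j by auto
    define P1 where "P1 = (\<Prod>k\<in>{1..<i}. d k)"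
    define P2 where "P2 = (\<Prod>k\<in>{Suc i..<j}. d k)"
    have P1z: "P1 \<noteq> 0" unfolding P1_def using Pnz[of 1 i] i1 by simp
    have P2z: "P2 \<noteq> 0" unfolding P2_def using Pnz[of "Suc i" j] i1 by simp
    have Psplit: "P = P1 * (d i * P2)"
      unfolding P_def P1_def P2_def
      using prod.atLeastLessThan_concat[of 1 i j d, symmetric] prod.atLeast_Suc_lessThan[of i j d] i1 by simp
    have e: "(-1)^(j-i) * (inverse A * (\<Prod>k\<in>{1..<i}. inverse (complex_of_real (x k - x (Suc k)))))
         * (inverse Bz * (\<Prod>k\<in>{i+1..<j}. inverse (complex_of_real (x (Suc k) - x k))))
       = ((-1)^(j-i) * (-1)^(j - Suc i)) * inverse A * inverse P1 * inverse Bz * inverse P2"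
      unfolding invprod revprod P1_def[symmetric] by (simp add: P2_def)
    have s: "(-1::complex)^(j-i) * (-1)^(j - Suc i) = -1" using neg_pow_mult i1 by simp
    have "((-1)^(j-i) * (inverse A * (\<Prod>k\<in>{1..<i}. inverse (complex_of_real (x k - x (Suc k)))))
         * (inverse Bz * (\<Prod>k\<in>{i+1..<j}. inverse (complex_of_real (x (Suc k) - x k))))) * Q
       = (-1) * inverse A * inverse P1 * inverse Bz * inverse P2 * (A * Bz * (P1 * (d i * P2)))"
      unfolding e s Q_def Psplit ..
    then show ?thesis using A0 B0 P1z P2z by (simp add: field_simps)
  qed
  have sumQ: "?S * Q = (\<Sum>i=1..j-1. - d i)"
    unfolding sum_distrib_right A_def[symmetric] Bz_def[symmetric] by (rule sum.cong[OF refl]) (rule ti)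
  have tele: "(\<Sum>i=1..j-1. d i) = Bz - A"
  proof -
    have "{1..j-1} = {1..<j}" using j by auto
    then have "(\<Sum>i=1..j-1. d i) = complex_of_real (\<Sum>i=1..<j. x i - x (Suc i))" by (simp add: d_def)
    also have "(\<Sum>i=1..<j. x i - x (Suc i)) = - (\<Sum>i=1..<j. x (Suc i) - x i)"
      by (simp add: sum_negf[symmetric])
    also have "(\<Sum>i=1..<j. x (Suc i) - x i) = x j - x 1" by (rule sum_Suc_diff'[OF j])
    finally show ?thesis unfolding A_def Bz_def by simp
  qed
  have "(?T1 + ?S + ?T3) * Q = 0"
    unfolding distrib_right t1 t3 sumQ sum_negf tele by simp
  then show ?thesis using Q0 by simp
qed


locale nik =
  fixes m :: nat and D :: "nat \<Rightarrow> real set" and e :: "nat \<Rightarrow> real" and mu :: "nat \<Rightarrow> real measure"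
  assumes disj: "\<And>j. 1 \<le> j \<Longrightarrow> j < m \<Longrightarrow> D j \<inter> D (Suc j) = {}"
    and classM: "\<And>j. 1 \<le> j \<Longrightarrow> j \<le> m \<Longrightarrow> in_class_M (mu j) (D j)"
begin

definition M' :: "nat \<Rightarrow> real measure" where
  "M' k = (if 1 \<le> k \<and> k \<le> m then mu k else null_measure borel)"

lemma sets_mu: "1 \<le> k \<Longrightarrow> k \<le> m \<Longrightarrow> sets (mu k) = sets borel"
  using classM unfolding in_class_M_def by blast

lemma finite_mu: "1 \<le> k \<Longrightarrow> k \<le> m \<Longrightarrow> finite_measure (mu k)"
  using classM unfolding in_class_M_def by blast

lemma sets_M'[measurable_cong]: "sets (M' k) = sets borel"
proof (cases "1 \<le> k \<and> k \<le> m")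
  case True then show ?thesis unfolding M'_def using sets_mu by (simp only: if_P)
next
  case False then show ?thesis unfolding M'_def if_not_P[OF False] by simp
qed

lemma space_M'[simp]: "space (M' k) = UNIV"
  using sets_eq_imp_space_eq[OF sets_M'[of k]] by simp

lemma finite_M': "finite_measure (M' k)"
proof (cases "1 \<le> k \<and> k \<le> m")
  case True then show ?thesis unfolding M'_def using finite_mu by (simp only: if_P)
next
  case False
  then have "M' k = null_measure borel" unfolding M'_def if_not_P[OF False] by simp
  then show ?thesis by (simp add: finite_measureI)
qed

lemma M'_eq: "1 \<le> k \<Longrightarrow> k \<le> m \<Longrightarrow> M' k = mu k"
  unfolding M'_def by simp

lemma psf: "product_sigma_finite M'"
  unfolding product_sigma_finite_def
proof
  fix i show "sigma_finite_measure (M' i)"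
    using finite_M'[of i] by (rule finite_measure.axioms(1))
qed

lemma Dcompact: "1 \<le> k \<Longrightarrow> k \<le> m \<Longrightarrow> compact (D k)"
proof -
  assume k: "1 \<le> k" "k \<le> m"
  have "compact (meas_support (mu k))" "convex hull (meas_support (mu k)) = D k"
    using classM[OF k] unfolding in_class_M_def by auto
  then show ?thesis using compact_convex_hull by metis
qed

lemma Dclosed: "1 \<le> k \<Longrightarrow> k \<le> m \<Longrightarrow> closure (D k) = D k"
  by (simp add: Dcompact compact_imp_closed)

lemma supp_sub: "1 \<le> k \<Longrightarrow> k \<le> m \<Longrightarrow> meas_support (mu k) \<subseteq> D k"
proof -
  assume k: "1 \<le> k" "k \<le> m"
  have "convex hull (meas_support (mu k)) = D k"
    using classM[OF k] unfolding in_class_M_def by auto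
  then show ?thesis using hull_subset by metis
qed

lemma AE_supp_gen:
  fixes M :: "real measure"
  assumes S: "sets M = sets borel"
  shows "AE x in M. x \<in> meas_support M"
proof -
  define Q where "Q = {(q,r). q \<in> \<rat> \<and> r \<in> \<rat> \<and> emeasure M (ball q r) = 0}"
  have cQ: "countable Q"
  proof -
    have "Q \<subseteq> \<rat> \<times> \<rat>" unfolding Q_def by auto
    moreover have "countable (\<rat> \<times> (\<rat>::real set))" by (intro countable_SIGMA countable_rat)
    ultimately show ?thesis using countable_subset by blast
  qed
  have N: "(\<Union>p\<in>Q. ball (fst p) (snd p)) \<in> null_sets M"
  proof (rule null_sets_UN'[OF cQ])
    fix p assume "p \<in> Q"
    then have "emeasure M (ball (fst p) (snd p)) = 0" unfolding Q_def by auto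
    moreover have "ball (fst p) (snd p) \<in> sets M" unfolding S by simp
    ultimately show "ball (fst p) (snd p) \<in> null_sets M" by (rule null_setsI)
  qed
  show ?thesis
  proof (rule AE_I'[OF N], safe)
    fix x assume "x \<in> space M" "x \<notin> meas_support M"
    then obtain \<epsilon> where ep: "\<epsilon> > 0" "\<not> emeasure M (ball x \<epsilon>) > 0"
      unfolding meas_support_def by auto
    then have z: "emeasure M (ball x \<epsilon>) = 0" by (simp add: zero_less_iff_neq_zero)
    obtain q where q: "q \<in> \<rat>" "x - \<epsilon>/3 < q" "q < x + \<epsilon>/3"
      using Rats_dense_in_real[of "x - \<epsilon>/3" "x + \<epsilon>/3"] ep by auto
    obtain r where r: "r \<in> \<rat>" "\<epsilon>/3 < r" "r < 2*\<epsilon>/3"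
      using Rats_dense_in_real[of "\<epsilon>/3" "2*\<epsilon>/3"] ep by auto
    have sub: "ball q r \<subseteq> ball x \<epsilon>"
    proof
      fix y assume "y \<in> ball q r"
      then have "\<bar>q - y\<bar> < r" by (simp add: dist_real_def)
      then have "\<bar>x - y\<bar> < \<epsilon>" using q r by (simp add: abs_less_iff)
      then show "y \<in> ball x \<epsilon>" by (simp add: dist_real_def)
    qed
    have "emeasure M (ball q r) \<le> emeasure M (ball x \<epsilon>)"
      by (rule emeasure_mono[OF sub]) (simp add: S)
    then have "emeasure M (ball q r) = 0" using z by simp
    then have "(q,r) \<in> Q" unfolding Q_def using q r by auto
    moreover have "x \<in> ball q r" using q r by (simp add: dist_real_def abs_less_iff)
    ultimately show "x \<in> (\<Union>p\<in>Q. ball (fst p) (snd p))" by (intro UN_I[of "(q,r)"]) auto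
  qed
qed

lemma AE_D: "1 \<le> k \<Longrightarrow> k \<le> m \<Longrightarrow> AE x in mu k. x \<in> D k"
proof -
  assume k: "1 \<le> k" "k \<le> m"
  have "AE x in mu k. x \<in> meas_support (mu k)"
    using AE_supp_gen[of "mu k"] classM[OF k] unfolding in_class_M_def by blast
  then show ?thesis
    by (rule eventually_mono) (use supp_sub[OF k] in blast)
qed

definition sep :: "nat \<Rightarrow> real" where
  "sep k = (SOME d. d > 0 \<and> (\<forall>x\<in>D k. \<forall>y\<in>D (Suc k). d \<le> \<bar>x - y\<bar>))"

lemma sep: assumes "1 \<le> k" "k < m"
  shows "sep k > 0" "\<And>x y. x \<in> D k \<Longrightarrow> y \<in> D (Suc k) \<Longrightarrow> sep k \<le> \<bar>x - y\<bar>"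
proof -
  have "\<exists>d>0. \<forall>x\<in>D k. \<forall>y\<in>D (Suc k). d \<le> dist x y"
    using separate_compact_closed[of "D k" "D (Suc k)"] Dcompact[of k] Dcompact[of "Suc k"]
      disj[of k] assms compact_imp_closed by auto
  then have "\<exists>d. d > 0 \<and> (\<forall>x\<in>D k. \<forall>y\<in>D (Suc k). d \<le> \<bar>x - y\<bar>)"
    unfolding dist_real_def by blast
  then have P: "sep k > 0 \<and> (\<forall>x\<in>D k. \<forall>y\<in>D (Suc k). sep k \<le> \<bar>x - y\<bar>)"
    unfolding sep_def by (rule someI_ex)
  then show "sep k > 0" by blast
  show "\<And>x y. x \<in> D k \<Longrightarrow> y \<in> D (Suc k) \<Longrightarrow> sep k \<le> \<bar>x - y\<bar>" using P by blast
qed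


lemma sfm_M': "sigma_finite_measure (M' k)"
  using finite_M'[of k] by (rule finite_measure.axioms(1))

lemma meas_up: "1 \<le> a \<Longrightarrow> a + n \<le> m \<Longrightarrow> (\<lambda>y. nik_up e mu a n (complex_of_real y)) \<in> borel_measurable borel"
proof (induction n arbitrary: a)
  case 0
  interpret sigma_finite_measure "M' a" by (rule sfm_M')
  have "(\<lambda>y. LINT x|M' a. 1 / (complex_of_real y - complex_of_real x)) \<in> borel_measurable borel" by measurable
  then show ?case using 0 by (simp add: cauchy_tr_def M'_eq)
next
  case (Suc n)
  interpret sigma_finite_measure "M' a" by (rule sfm_M')
  have [measurable]: "(\<lambda>y. nik_up e mu (Suc a) n (complex_of_real y)) \<in> borel_measurable borel" using Suc by simp
  have "(\<lambda>y. LINT x|M' a. nik_up e mu (Suc a) n (complex_of_real x) / (complex_of_real y - complex_of_real x)) \<in> borel_measurable borel" by measurable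
  then show ?case using Suc.prems by (simp add: cauchy_tr_def M'_eq)
qed

lemma meas_down: "n < a \<Longrightarrow> a \<le> m \<Longrightarrow> (\<lambda>y. nik_down e mu a n (complex_of_real y)) \<in> borel_measurable borel"
proof (induction n arbitrary: a)
  case 0
  interpret sigma_finite_measure "M' a" by (rule sfm_M')
  have "(\<lambda>y. LINT x|M' a. 1 / (complex_of_real y - complex_of_real x)) \<in> borel_measurable borel" by measurable
  then show ?case using 0 by (simp add: cauchy_tr_def M'_eq)
next
  case (Suc n)
  interpret sigma_finite_measure "M' a" by (rule sfm_M')
  have [measurable]: "(\<lambda>y. nik_down e mu (a - 1) n (complex_of_real y)) \<in> borel_measurable borel" using Suc by simp
  have "(\<lambda>y. LINT x|M' a. nik_down e mu (a - 1) n (complex_of_real x) / (complex_of_real y - complex_of_real x)) \<in> borel_measurable borel" by measurable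
  then show ?case using Suc.prems by (simp add: cauchy_tr_def M'_eq)
qed

definition upF :: "nat \<Rightarrow> nat \<Rightarrow> complex \<Rightarrow> (nat \<Rightarrow> real) \<Rightarrow> complex" where
  "upF a b w x = (if \<forall>k\<in>{a..b}. x k \<in> closure (D k) then
     inverse (w - complex_of_real (x a)) * (\<Prod>k\<in>{a..<b}. inverse (complex_of_real (x k - x (Suc k)))) else 0)"

definition downF :: "nat \<Rightarrow> nat \<Rightarrow> complex \<Rightarrow> (nat \<Rightarrow> real) \<Rightarrow> complex" where
  "downF b c w x = (if \<forall>k\<in>{c..b}. x k \<in> closure (D k) then
     inverse (w - complex_of_real (x b)) * (\<Prod>k\<in>{c..<b}. inverse (complex_of_real (x (Suc k) - x k))) else 0)"

lemma meas_comp: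
  assumes g: "g \<in> measurable N (PiM I M')" and k: "k \<in> I"
  shows "(\<lambda>p. g p k) \<in> borel_measurable N"
  using measurable_comp[OF g measurable_component_singleton[OF k, of M']]
  by (simp add: comp_def measurable_cong_sets[OF refl sets_M'])

lemma meas_cond:
  assumes g: "g \<in> measurable N (PiM I M')" and ab: "{a..b} \<subseteq> I"
  shows "{p \<in> space N. \<forall>k\<in>{a..b}. g p k \<in> closure (D k)} \<in> sets N"
proof (rule sets.sets_Collect_finite_All)
  fix k assume "k \<in> {a..b}"
  then have m: "(\<lambda>p. g p k) \<in> borel_measurable N" using meas_comp[OF g] ab by auto
  have "{p \<in> space N. g p k \<in> closure (D k)} = (\<lambda>p. g p k) -` closure (D k) \<inter> space N" by auto
  also have "\<dots> \<in> sets N" by (rule measurable_sets[OF m]) simp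
  finally show "{p \<in> space N. g p k \<in> closure (D k)} \<in> sets N" .
qed simp

lemma meas_upF:
  assumes f: "f \<in> borel_measurable N" and g: "g \<in> measurable N (PiM I M')" and ab: "{a..b} \<subseteq> I" and ab': "a \<le> b"
  shows "(\<lambda>p. upF a b (f p) (g p)) \<in> borel_measurable N"
  unfolding upF_def
proof (rule measurable_If[OF _ _ meas_cond[OF g ab]])
  have "a \<in> I" using ab ab' by auto
  then have ga: "(\<lambda>p. g p a) \<in> borel_measurable N" using meas_comp[OF g] by auto
  show "(\<lambda>p. inverse (f p - complex_of_real (g p a)) * (\<Prod>k\<in>{a..<b}. inverse (complex_of_real (g p k - g p (Suc k))))) \<in> borel_measurable N"
  proof -
    have P: "(\<lambda>p. \<Prod>k\<in>{a..<b}. inverse (complex_of_real (g p k - g p (Suc k)))) \<in> borel_measurable N"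
    proof (rule borel_measurable_prod)
      fix k assume k: "k \<in> {a..<b}"
      have kI: "k \<in> I" "Suc k \<in> I" using ab k by auto
      note [measurable] = meas_comp[OF g kI(1)] meas_comp[OF g kI(2)]
      show "(\<lambda>p. inverse (complex_of_real (g p k - g p (Suc k)))) \<in> borel_measurable N" by measurable
    qed
    note [measurable] = P ga f
    show ?thesis by measurable
  qed
qed simp

lemma meas_downF:
  assumes f: "f \<in> borel_measurable N" and g: "g \<in> measurable N (PiM I M')" and ab: "{c..b} \<subseteq> I" and cb: "c \<le> b"
  shows "(\<lambda>p. downF b c (f p) (g p)) \<in> borel_measurable N"
  unfolding downF_def
proof (rule measurable_If[OF _ _ meas_cond[OF g ab]])
  have "b \<in> I" using ab cb by auto
  then have gb: "(\<lambda>p. g p b) \<in> borel_measurable N" using meas_comp[OF g] by auto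
  show "(\<lambda>p. inverse (f p - complex_of_real (g p b)) * (\<Prod>k\<in>{c..<b}. inverse (complex_of_real (g p (Suc k) - g p k)))) \<in> borel_measurable N"
  proof -
    have P: "(\<lambda>p. \<Prod>k\<in>{c..<b}. inverse (complex_of_real (g p (Suc k) - g p k))) \<in> borel_measurable N"
    proof (rule borel_measurable_prod)
      fix k assume k: "k \<in> {c..<b}"
      have kI: "k \<in> I" "Suc k \<in> I" using ab k by auto
      note [measurable] = meas_comp[OF g kI(1)] meas_comp[OF g kI(2)]
      show "(\<lambda>p. inverse (complex_of_real (g p (Suc k) - g p k))) \<in> borel_measurable N" by measurable
    qed
    note [measurable] = P gb f
    show ?thesis by measurable
  qed
qed simp


lemma dist_pt:
  assumes a: "1 \<le> a" "a \<le> m" and w: "w \<notin> complex_of_real ` D a"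
  shows "\<exists>\<delta>>0. \<forall>y\<in>D a. \<delta> \<le> cmod (w - complex_of_real y)"
proof (cases "D a = {}")
  case True then show ?thesis by (intro exI[of _ 1]) auto
next
  case False
  have "continuous_on (D a) (\<lambda>y. cmod (w - complex_of_real y))"
    by (intro continuous_intros)
  then obtain y0 where y0: "y0 \<in> D a" "\<forall>y\<in>D a. cmod (w - complex_of_real y0) \<le> cmod (w - complex_of_real y)"
    using continuous_attains_inf[OF Dcompact[OF a] False] by blast
  have "w \<noteq> complex_of_real y0" using w y0(1) by auto
  then have "cmod (w - complex_of_real y0) > 0" by simp
  then show ?thesis using y0(2) by blast
qed

lemma prod_bound:
  assumes "1 \<le> a" "b \<le> m" "\<forall>k\<in>{a..b}. x k \<in> D k"
  shows "norm (\<Prod>k\<in>{a..<b}. inverse (complex_of_real (x k - x (Suc k)))) \<le> (\<Prod>k\<in>{a..<b}. inverse (sep k))"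
    and "norm (\<Prod>k\<in>{a..<b}. inverse (complex_of_real (x (Suc k) - x k))) \<le> (\<Prod>k\<in>{a..<b}. inverse (sep k))"
proof -
  have le: "norm (inverse (complex_of_real (x k - x (Suc k)))) \<le> inverse (sep k)"
    and le2: "norm (inverse (complex_of_real (x (Suc k) - x k))) \<le> inverse (sep k)"
    if k: "k \<in> {a..<b}" for k
  proof -
    have k1: "1 \<le> k" "k < m" using k assms by auto
    have "x k \<in> D k" "x (Suc k) \<in> D (Suc k)" using k assms(3) by auto
    then have "sep k \<le> \<bar>x k - x (Suc k)\<bar>" using sep(2)[OF k1] by blast
    then have "inverse \<bar>x k - x (Suc k)\<bar> \<le> inverse (sep k)"
      using sep(1)[OF k1] by (rule le_imp_inverse_le)
    then show "norm (inverse (complex_of_real (x k - x (Suc k)))) \<le> inverse (sep k)"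
      "norm (inverse (complex_of_real (x (Suc k) - x k))) \<le> inverse (sep k)"
    proof -
      have e1: "norm (inverse (complex_of_real (x k - x (Suc k)))) = inverse \<bar>x k - x (Suc k)\<bar>"
        by (simp only: norm_inverse norm_of_real)
      have e2: "norm (inverse (complex_of_real (x (Suc k) - x k))) = inverse \<bar>x k - x (Suc k)\<bar>"
        by (simp only: norm_inverse norm_of_real abs_minus_commute)
      show "norm (inverse (complex_of_real (x k - x (Suc k)))) \<le> inverse (sep k)"
        "norm (inverse (complex_of_real (x (Suc k) - x k))) \<le> inverse (sep k)"
        using e1 e2 \<open>inverse \<bar>x k - x (Suc k)\<bar> \<le> inverse (sep k)\<close> by simp_all
    qed
  qed
  show "norm (\<Prod>k\<in>{a..<b}. inverse (complex_of_real (x k - x (Suc k)))) \<le> (\<Prod>k\<in>{a..<b}. inverse (sep k))"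
    unfolding prod_norm[symmetric] by (intro prod_mono conjI norm_ge_zero le)
  show "norm (\<Prod>k\<in>{a..<b}. inverse (complex_of_real (x (Suc k) - x k))) \<le> (\<Prod>k\<in>{a..<b}. inverse (sep k))"
    unfolding prod_norm[symmetric] by (intro prod_mono conjI norm_ge_zero le2)
qed

lemma sep_prod_nonneg: "1 \<le> a \<Longrightarrow> b \<le> m \<Longrightarrow> 0 \<le> (\<Prod>k\<in>{a..<b}. inverse (sep k))"
  by (intro prod_nonneg) (use sep(1) in \<open>auto intro: less_imp_le\<close>)

lemma cond_closure: "1 \<le> a \<Longrightarrow> b \<le> m \<Longrightarrow> (\<forall>k\<in>{a..b}. x k \<in> closure (D k)) \<longleftrightarrow> (\<forall>k\<in>{a..b}. x k \<in> D k)"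
  using Dclosed by auto

lemma bound_upF:
  assumes a: "1 \<le> a" "a \<le> b" "b \<le> m" and w: "w \<notin> complex_of_real ` D a"
  shows "\<exists>B. \<forall>x. norm (upF a b w x) \<le> B"
proof -
  obtain \<delta> where d: "\<delta> > 0" "\<forall>y\<in>D a. \<delta> \<le> cmod (w - complex_of_real y)"
    using dist_pt[OF a(1) _ w] a by auto
  define B where "B = inverse \<delta> * (\<Prod>k\<in>{a..<b}. inverse (sep k))"
  have B0: "0 \<le> B" unfolding B_def using d(1) sep_prod_nonneg[OF a(1) a(3)] by simp
  have "norm (upF a b w x) \<le> B" for x
  proof (cases "\<forall>k\<in>{a..b}. x k \<in> D k")
    case True
    then have c: "\<forall>k\<in>{a..b}. x k \<in> closure (D k)" using cond_closure[OF a(1) a(3)] by blast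
    have xa: "x a \<in> D a" using True a by auto
    have "norm (inverse (w - complex_of_real (x a))) \<le> inverse \<delta>"
      unfolding norm_inverse using d xa by (intro le_imp_inverse_le) auto
    then show ?thesis unfolding upF_def if_P[OF c] B_def norm_mult
      by (intro mult_mono prod_bound(1)[OF a(1) a(3) True]) (auto simp: d(1) less_imp_le)
  next
    case False
    then have nc: "\<not> (\<forall>k\<in>{a..b}. x k \<in> closure (D k))" using cond_closure[OF a(1) a(3)] by blast
    show ?thesis unfolding upF_def if_not_P[OF nc] using B0 by simp
  qed
  then show ?thesis by blast
qed

lemma bound_downF:
  assumes a: "1 \<le> c" "c \<le> b" "b \<le> m" and w: "w \<notin> complex_of_real ` D b"
  shows "\<exists>B. \<forall>x. norm (downF b c w x) \<le> B"
proof -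
  obtain \<delta> where d: "\<delta> > 0" "\<forall>y\<in>D b. \<delta> \<le> cmod (w - complex_of_real y)"
    using dist_pt[OF _ a(3) w] a by auto
  define B where "B = inverse \<delta> * (\<Prod>k\<in>{c..<b}. inverse (sep k))"
  have B0: "0 \<le> B" unfolding B_def using d(1) sep_prod_nonneg[OF a(1) a(3)] by simp
  have "norm (downF b c w x) \<le> B" for x
  proof (cases "\<forall>k\<in>{c..b}. x k \<in> D k")
    case True
    then have cc: "\<forall>k\<in>{c..b}. x k \<in> closure (D k)" using cond_closure[OF a(1) a(3)] by blast
    have xa: "x b \<in> D b" using True a by auto
    have "norm (inverse (w - complex_of_real (x b))) \<le> inverse \<delta>"
      unfolding norm_inverse using d xa by (intro le_imp_inverse_le) auto
    then show ?thesis unfolding downF_def if_P[OF cc] B_def norm_mult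
      by (intro mult_mono prod_bound(2)[OF a(1) a(3) True]) (auto simp: d(1) less_imp_le)
  next
    case False
    then have nc: "\<not> (\<forall>k\<in>{c..b}. x k \<in> closure (D k))" using cond_closure[OF a(1) a(3)] by blast
    show ?thesis unfolding downF_def if_not_P[OF nc] using B0 by simp
  qed
  then show ?thesis by blast
qed

lemma fin_PiM: "finite I \<Longrightarrow> finite_measure (PiM I M')"
proof -
  assume I: "finite I"
  interpret product_sigma_finite M' by (rule psf)
  have "emeasure (PiM I M') (space (PiM I M')) = emeasure (PiM I M') (Pi\<^sub>E I (\<lambda>i. space (M' i)))"
    by (simp add: space_PiM)
  also have "\<dots> = (\<Prod>i\<in>I. emeasure (M' i) (space (M' i)))"
    using I by (intro emeasure_PiM) auto
  also have "\<dots> \<noteq> \<infinity>"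
    using finite_measure.emeasure_finite[OF finite_M'] by (simp add: ennreal_prod_eq_top)
  finally show ?thesis by (rule finite_measureI)
qed

lemma integ:
  fixes f :: "(nat \<Rightarrow> real) \<Rightarrow> complex"
  assumes "finite I" "f \<in> borel_measurable (PiM I M')" "\<And>x. norm (f x) \<le> B"
  shows "integrable (PiM I M') f"
proof -
  interpret finite_measure "PiM I M'" by (rule fin_PiM) fact
  show ?thesis by (rule integrable_const_bound[where B=B]) (use assms in auto)
qed


lemma upF_upd:
  assumes ab: "a < b"
  shows "upF a b w (x(a:=t)) = (if t \<in> closure (D a) then inverse (w - complex_of_real t) * upF (Suc a) b (complex_of_real t) x else 0)"
proof -
  have c: "(\<forall>k\<in>{a..b}. (x(a:=t)) k \<in> closure (D k)) \<longleftrightarrow> t \<in> closure (D a) \<and> (\<forall>k\<in>{Suc a..b}. x k \<in> closure (D k))"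
  proof -
    have "{a..b} = insert a {Suc a..b}" using ab by auto
    then show ?thesis by auto
  qed
  have p: "(\<Prod>k\<in>{a..<b}. inverse (complex_of_real ((x(a:=t)) k - (x(a:=t)) (Suc k))))
     = inverse (complex_of_real (t - x (Suc a))) * (\<Prod>k\<in>{Suc a..<b}. inverse (complex_of_real (x k - x (Suc k))))"
    by (subst prod.atLeast_Suc_lessThan[OF ab]) (auto intro!: prod.cong)
  show ?thesis unfolding upF_def c p by (simp add: of_real_diff)
qed

lemma downF_upd:
  assumes cb: "c \<le> b"
  shows "downF (Suc b) c w (x(Suc b:=t)) = (if t \<in> closure (D (Suc b)) then inverse (w - complex_of_real t) * downF b c (complex_of_real t) x else 0)"
proof -
  have cc: "(\<forall>k\<in>{c..Suc b}. (x(Suc b:=t)) k \<in> closure (D k)) \<longleftrightarrow> t \<in> closure (D (Suc b)) \<and> (\<forall>k\<in>{c..b}. x k \<in> closure (D k))"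
  proof -
    have "{c..Suc b} = insert (Suc b) {c..b}" using cb by auto
    then show ?thesis by auto
  qed
  have p: "(\<Prod>k\<in>{c..<Suc b}. inverse (complex_of_real ((x(Suc b:=t)) (Suc k) - (x(Suc b:=t)) k)))
     = (\<Prod>k\<in>{c..<b}. inverse (complex_of_real (x (Suc k) - x k))) * inverse (complex_of_real (t - x b))"
    by (subst prod.atLeastLessThan_Suc[OF cb]) (auto intro!: prod.cong)
  show ?thesis unfolding downF_def cc p by (simp add: of_real_diff mult.commute)
qed

lemma sfm_PiM: "finite I \<Longrightarrow> sigma_finite_measure (PiM I M')"
  using fin_PiM finite_measure.axioms(1) by blast


lemma closure_sets[measurable]: "closure (D k) \<in> sets borel"
  by simp

lemma rep_up:
  "1 \<le> a \<Longrightarrow> a + n \<le> m \<Longrightarrow> w \<notin> complex_of_real ` D a \<Longrightarrow>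
   nik_up e mu a n w = (\<Prod>k\<in>{a..a+n}. complex_of_real (e k)) * integral\<^sup>L (PiM {a..a+n} M') (upF a (a+n) w)"
proof (induction n arbitrary: a w)
  case 0
  interpret product_sigma_finite M' by (rule psf)
  define h where "h t = (if t \<in> closure (D a) then inverse (w - complex_of_real t) else 0)" for t
  have hm: "h \<in> borel_measurable (M' a)" unfolding h_def by measurable
  have "upF a a w = (\<lambda>x. h (x a))" by (rule ext) (simp add: upF_def h_def)
  then have "integral\<^sup>L (PiM {a} M') (upF a a w) = integral\<^sup>L (PiM {a} M') (\<lambda>x. h (x a))"
    by simp
  also have "\<dots> = integral\<^sup>L (M' a) h" by (rule product_integral_singleton[OF hm])
  also have "\<dots> = (LINT t|mu a. 1 / (w - complex_of_real t))"
  proof -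
    have "integral\<^sup>L (M' a) h = (LINT t|M' a. 1 / (w - complex_of_real t))"
    proof (rule integral_cong_AE)
      show "h \<in> borel_measurable (M' a)" by (rule hm)
      show "(\<lambda>t. 1 / (w - complex_of_real t)) \<in> borel_measurable (M' a)" by measurable
      have am: "1 \<le> a" "a \<le> m" using 0 by auto
      show "AE t in M' a. h t = 1 / (w - complex_of_real t)"
        using AE_D[OF am] unfolding M'_eq[OF am]
      proof (rule eventually_mono)
        fix t assume "t \<in> D a"
        then show "h t = 1 / (w - complex_of_real t)"
          using closure_subset[of "D a"] by (auto simp: h_def divide_inverse)
      qed
    qed
    then show ?thesis using 0 M'_eq[of a] by simp
  qed
  finally show ?case using 0 by (simp add: cauchy_tr_def)
next
  case (Suc n)
  define b where "b = a + Suc n"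
  define J where "J = {Suc a..b}"
  have ab: "a < b" "b \<le> m" "1 \<le> a" using Suc.prems unfolding b_def by auto
  have ins: "{a..b} = insert a J" unfolding J_def using ab by auto
  have aJ: "a \<notin> J" "finite J" unfolding J_def by auto
  interpret product_sigma_finite M' by (rule psf)
  interpret J: sigma_finite_measure "PiM J M'" by (rule sfm_PiM[OF aJ(2)])
  interpret Ma: sigma_finite_measure "M' a" by (rule sfm_M')
  interpret P: pair_sigma_finite "PiM J M'" "M' a" unfolding pair_sigma_finite_def
    using sfm_PiM[OF aJ(2)] sfm_M' by auto
  define G where "G x t = (if t \<in> closure (D a) then inverse (w - complex_of_real t) * upF (Suc a) b (complex_of_real t) x else 0)" for x t
  have G_eq: "G x t = upF a b w (x(a:=t))" for x t
    unfolding G_def using upF_upd[OF ab(1)] by simp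
  obtain B where B: "\<And>x. norm (upF a b w x) \<le> B"
    using bound_upF[of a b w] ab Suc.prems by auto
  have mF: "upF a b w \<in> borel_measurable (PiM {a..b} M')"
    using meas_upF[where f="\<lambda>_. w" and g="\<lambda>x. x" and N="PiM {a..b} M'" and I="{a..b}" and a=a and b=b] ab
    by simp
  have intF: "integrable (PiM {a..b} M') (upF a b w)"
    by (rule integ[OF _ mF B]) simp
  have mU: "(\<lambda>p. upF (Suc a) b (complex_of_real (snd p)) (fst p)) \<in> borel_measurable (PiM J M' \<Otimes>\<^sub>M M' a)"
    by (rule meas_upF[where I=J]) (use ab in \<open>auto simp: J_def intro!: measurable_fst\<close>)
  have mU2: "(\<lambda>p. upF (Suc a) b (complex_of_real (fst p)) (snd p)) \<in> borel_measurable (M' a \<Otimes>\<^sub>M PiM J M')"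
    by (rule meas_upF[where I=J]) (use ab in \<open>auto simp: J_def intro!: measurable_snd\<close>)
  have mG: "(\<lambda>p. G (fst p) (snd p)) \<in> borel_measurable (PiM J M' \<Otimes>\<^sub>M M' a)"
    unfolding G_def using mU by measurable
  have intG: "integrable (PiM J M' \<Otimes>\<^sub>M M' a) (\<lambda>p. G (fst p) (snd p))"
  proof -
    interpret FP: finite_measure "PiM J M' \<Otimes>\<^sub>M M' a"
      by (rule finite_measure_pair_measure[OF finite_M' fin_PiM[OF aJ(2)]])
    show ?thesis by (rule FP.integrable_const_bound[where B=B]) (use mG B G_eq in auto)
  qed
  have "integral\<^sup>L (PiM {a..b} M') (upF a b w) = (\<integral>x. (\<integral>t. upF a b w (x(a:=t)) \<partial>M' a) \<partial>PiM J M')"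
    using product_integral_insert[OF aJ(2) aJ(1), of "upF a b w"] intF unfolding ins by simp
  also have "\<dots> = (\<integral>x. (\<integral>t. G x t \<partial>M' a) \<partial>PiM J M')" by (simp add: G_eq)
  also have "\<dots> = (\<integral>t. (\<integral>x. G x t \<partial>PiM J M') \<partial>M' a)"
    by (rule P.Fubini_integral[symmetric]) (use intG in \<open>simp add: case_prod_beta'\<close>)
  also have "\<dots> = (\<integral>t. (if t \<in> closure (D a) then inverse (w - complex_of_real t) * integral\<^sup>L (PiM J M') (upF (Suc a) b (complex_of_real t)) else 0) \<partial>M' a)"
  proof -
    have "(\<lambda>t. \<integral>x. G x t \<partial>PiM J M') = (\<lambda>t. if t \<in> closure (D a) then inverse (w - complex_of_real t) * integral\<^sup>L (PiM J M') (upF (Suc a) b (complex_of_real t)) else 0)"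
    proof
      fix t show "(\<integral>x. G x t \<partial>PiM J M') = (if t \<in> closure (D a) then inverse (w - complex_of_real t) * integral\<^sup>L (PiM J M') (upF (Suc a) b (complex_of_real t)) else 0)"
        by (cases "t \<in> closure (D a)") (simp_all add: G_def)
    qed
    then show ?thesis by simp
  qed
  finally have L: "integral\<^sup>L (PiM {a..b} M') (upF a b w) = \<dots>" .
  define E' where "E' = (\<Prod>k\<in>{Suc a..b}. complex_of_real (e k))"
  have mI: "(\<lambda>t. integral\<^sup>L (PiM J M') (upF (Suc a) b (complex_of_real t))) \<in> borel_measurable (M' a)"
    using J.borel_measurable_lebesgue_integral[of "\<lambda>t x. upF (Suc a) b (complex_of_real t) x" "M' a"] mU2
    by (simp add: case_prod_beta')
  have mN[measurable]: "(\<lambda>y. nik_up e mu (Suc a) n (complex_of_real y)) \<in> borel_measurable borel"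
    by (rule meas_up) (use ab b_def in auto)
  have am0: "a \<le> m" using ab by auto
  have "(LINT t|mu a. nik_up e mu (Suc a) n (complex_of_real t) / (w - complex_of_real t))
      = (LINT t|M' a. E' * (if t \<in> closure (D a) then inverse (w - complex_of_real t) * integral\<^sup>L (PiM J M') (upF (Suc a) b (complex_of_real t)) else 0))"
    unfolding M'_eq[OF ab(3) am0, symmetric]
  proof (rule integral_cong_AE)
    show "(\<lambda>t. nik_up e mu (Suc a) n (complex_of_real t) / (w - complex_of_real t)) \<in> borel_measurable (M' a)"
      by measurable
    show "(\<lambda>t. E' * (if t \<in> closure (D a) then inverse (w - complex_of_real t) * integral\<^sup>L (PiM J M') (upF (Suc a) b (complex_of_real t)) else 0)) \<in> borel_measurable (M' a)"
      using mI by measurable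
    have am: "a \<le> m" "a < m" using ab by auto
    show "AE t in M' a. nik_up e mu (Suc a) n (complex_of_real t) / (w - complex_of_real t) = E' * (if t \<in> closure (D a) then inverse (w - complex_of_real t) * integral\<^sup>L (PiM J M') (upF (Suc a) b (complex_of_real t)) else 0)"
      using AE_D[OF ab(3) am(1)] unfolding M'_eq[OF ab(3) am(1)]
    proof (rule eventually_mono)
      fix t assume t: "t \<in> D a"
      have "complex_of_real t \<notin> complex_of_real ` D (Suc a)"
        using t disj[OF ab(3) am(2)] by auto
      then have IH: "nik_up e mu (Suc a) n (complex_of_real t) = E' * integral\<^sup>L (PiM J M') (upF (Suc a) b (complex_of_real t))"
        using Suc.IH[of "Suc a" "complex_of_real t"] ab unfolding E'_def J_def b_def by simp
      show "nik_up e mu (Suc a) n (complex_of_real t) / (w - complex_of_real t) = E' * (if t \<in> closure (D a) then inverse (w - complex_of_real t) * integral\<^sup>L (PiM J M') (upF (Suc a) b (complex_of_real t)) else 0)"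
        using t closure_subset[of "D a"] unfolding IH by (auto simp: divide_inverse)
    qed
  qed
  also have "\<dots> = E' * integral\<^sup>L (PiM {a..b} M') (upF a b w)" unfolding L by simp
  finally have R: "(LINT t|mu a. nik_up e mu (Suc a) n (complex_of_real t) / (w - complex_of_real t)) = E' * integral\<^sup>L (PiM {a..b} M') (upF a b w)" .
  have Pr: "(\<Prod>k\<in>{a..b}. complex_of_real (e k)) = complex_of_real (e a) * E'"
    unfolding E'_def using ab by (subst prod.atLeast_Suc_atMost) auto
  show ?case unfolding b_def[symmetric] by (simp add: cauchy_tr_def R Pr)
qed


lemma rep_down:
  "n < b \<Longrightarrow> b \<le> m \<Longrightarrow> w \<notin> complex_of_real ` D b \<Longrightarrow>
   nik_down e mu b n w = (\<Prod>k\<in>{b-n..b}. complex_of_real (e k)) * integral\<^sup>L (PiM {b-n..b} M') (downF b (b-n) w)"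
proof (induction n arbitrary: b w)
  case 0
  interpret product_sigma_finite M' by (rule psf)
  define h where "h t = (if t \<in> closure (D b) then inverse (w - complex_of_real t) else 0)" for t
  have hm: "h \<in> borel_measurable (M' b)" unfolding h_def by measurable
  have "downF b b w = (\<lambda>x. h (x b))" by (rule ext) (simp add: downF_def h_def)
  then have "integral\<^sup>L (PiM {b} M') (downF b b w) = integral\<^sup>L (PiM {b} M') (\<lambda>x. h (x b))"
    by simp
  also have "\<dots> = integral\<^sup>L (M' b) h" by (rule product_integral_singleton[OF hm])
  also have "\<dots> = (LINT t|mu b. 1 / (w - complex_of_real t))"
  proof -
    have am: "1 \<le> b" "b \<le> m" using 0 by auto
    have "integral\<^sup>L (M' b) h = (LINT t|M' b. 1 / (w - complex_of_real t))"
    proof (rule integral_cong_AE)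
      show "h \<in> borel_measurable (M' b)" by (rule hm)
      show "(\<lambda>t. 1 / (w - complex_of_real t)) \<in> borel_measurable (M' b)" by measurable
      show "AE t in M' b. h t = 1 / (w - complex_of_real t)"
        using AE_D[OF am] unfolding M'_eq[OF am]
      proof (rule eventually_mono)
        fix t assume "t \<in> D b"
        then show "h t = 1 / (w - complex_of_real t)"
          using closure_subset[of "D b"] by (auto simp: h_def divide_inverse)
      qed
    qed
    then show ?thesis using M'_eq[OF am] by simp
  qed
  finally show ?case using 0 by (simp add: cauchy_tr_def)
next
  case (Suc n)
  obtain b' where bb: "b = Suc b'" using Suc.prems(1) by (cases b) auto
  define c where "c = b - Suc n"
  define J where "J = {c..b'}"
  have cb: "c \<le> b'" "b \<le> m" "1 \<le> c" "1 \<le> b'" "b' < m" "1 \<le> b" using Suc.prems unfolding c_def bb by auto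
  have ins: "{c..b} = insert b J" unfolding J_def bb using cb by auto
  have aJ: "b \<notin> J" "finite J" unfolding J_def bb by auto
  interpret product_sigma_finite M' by (rule psf)
  interpret J: sigma_finite_measure "PiM J M'" by (rule sfm_PiM[OF aJ(2)])
  interpret Ma: sigma_finite_measure "M' b" by (rule sfm_M')
  interpret P: pair_sigma_finite "PiM J M'" "M' b" unfolding pair_sigma_finite_def
    using sfm_PiM[OF aJ(2)] sfm_M' by auto
  define G where "G x t = (if t \<in> closure (D b) then inverse (w - complex_of_real t) * downF b' c (complex_of_real t) x else 0)" for x t
  have G_eq: "G x t = downF b c w (x(b:=t))" for x t
    unfolding G_def bb using downF_upd[OF cb(1)] by simp
  obtain B where B: "\<And>x. norm (downF b c w x) \<le> B"
    using bound_downF[of c b w] cb Suc.prems bb by auto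
  have mF: "downF b c w \<in> borel_measurable (PiM {c..b} M')"
    using meas_downF[where f="\<lambda>_. w" and g="\<lambda>x. x" and N="PiM {c..b} M'" and I="{c..b}" and c=c and b=b] cb bb
    by simp
  have intF: "integrable (PiM {c..b} M') (downF b c w)"
    by (rule integ[OF _ mF B]) simp
  have mU: "(\<lambda>p. downF b' c (complex_of_real (snd p)) (fst p)) \<in> borel_measurable (PiM J M' \<Otimes>\<^sub>M M' b)"
    by (rule meas_downF[where I=J]) (use cb in \<open>auto simp: J_def intro!: measurable_fst\<close>)
  have mU2: "(\<lambda>p. downF b' c (complex_of_real (fst p)) (snd p)) \<in> borel_measurable (M' b \<Otimes>\<^sub>M PiM J M')"
    by (rule meas_downF[where I=J]) (use cb in \<open>auto simp: J_def intro!: measurable_snd\<close>)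
  have mG: "(\<lambda>p. G (fst p) (snd p)) \<in> borel_measurable (PiM J M' \<Otimes>\<^sub>M M' b)"
    unfolding G_def using mU by measurable
  have intG: "integrable (PiM J M' \<Otimes>\<^sub>M M' b) (\<lambda>p. G (fst p) (snd p))"
  proof -
    interpret FP: finite_measure "PiM J M' \<Otimes>\<^sub>M M' b"
      by (rule finite_measure_pair_measure[OF finite_M' fin_PiM[OF aJ(2)]])
    show ?thesis by (rule FP.integrable_const_bound[where B=B]) (use mG B G_eq in auto)
  qed
  have "integral\<^sup>L (PiM {c..b} M') (downF b c w) = (\<integral>x. (\<integral>t. downF b c w (x(b:=t)) \<partial>M' b) \<partial>PiM J M')"
    using product_integral_insert[OF aJ(2) aJ(1), of "downF b c w"] intF unfolding ins by simp
  also have "\<dots> = (\<integral>x. (\<integral>t. G x t \<partial>M' b) \<partial>PiM J M')" by (simp add: G_eq)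
  also have "\<dots> = (\<integral>t. (\<integral>x. G x t \<partial>PiM J M') \<partial>M' b)"
    by (rule P.Fubini_integral[symmetric]) (use intG in \<open>simp add: case_prod_beta'\<close>)
  also have "\<dots> = (\<integral>t. (if t \<in> closure (D b) then inverse (w - complex_of_real t) * integral\<^sup>L (PiM J M') (downF b' c (complex_of_real t)) else 0) \<partial>M' b)"
  proof -
    have "(\<lambda>t. \<integral>x. G x t \<partial>PiM J M') = (\<lambda>t. if t \<in> closure (D b) then inverse (w - complex_of_real t) * integral\<^sup>L (PiM J M') (downF b' c (complex_of_real t)) else 0)"
    proof
      fix t show "(\<integral>x. G x t \<partial>PiM J M') = (if t \<in> closure (D b) then inverse (w - complex_of_real t) * integral\<^sup>L (PiM J M') (downF b' c (complex_of_real t)) else 0)"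
        by (cases "t \<in> closure (D b)") (simp_all add: G_def)
    qed
    then show ?thesis by simp
  qed
  finally have L: "integral\<^sup>L (PiM {c..b} M') (downF b c w) = \<dots>" .
  define E' where "E' = (\<Prod>k\<in>{c..b'}. complex_of_real (e k))"
  have mI: "(\<lambda>t. integral\<^sup>L (PiM J M') (downF b' c (complex_of_real t))) \<in> borel_measurable (M' b)"
    using J.borel_measurable_lebesgue_integral[of "\<lambda>t x. downF b' c (complex_of_real t) x" "M' b"] mU2
    by (simp add: case_prod_beta')
  have mN[measurable]: "(\<lambda>y. nik_down e mu b' n (complex_of_real y)) \<in> borel_measurable borel"
    by (rule meas_down) (use cb Suc.prems bb in auto)
  have "(LINT t|mu b. nik_down e mu b' n (complex_of_real t) / (w - complex_of_real t))
      = (LINT t|M' b. E' * (if t \<in> closure (D b) then inverse (w - complex_of_real t) * integral\<^sup>L (PiM J M') (downF b' c (complex_of_real t)) else 0))"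
    unfolding M'_eq[OF cb(6) cb(2), symmetric]
  proof (rule integral_cong_AE)
    show "(\<lambda>t. nik_down e mu b' n (complex_of_real t) / (w - complex_of_real t)) \<in> borel_measurable (M' b)"
      by measurable
    show "(\<lambda>t. E' * (if t \<in> closure (D b) then inverse (w - complex_of_real t) * integral\<^sup>L (PiM J M') (downF b' c (complex_of_real t)) else 0)) \<in> borel_measurable (M' b)"
      using mI by measurable
    show "AE t in M' b. nik_down e mu b' n (complex_of_real t) / (w - complex_of_real t) = E' * (if t \<in> closure (D b) then inverse (w - complex_of_real t) * integral\<^sup>L (PiM J M') (downF b' c (complex_of_real t)) else 0)"
      using AE_D[OF cb(6) cb(2)] unfolding M'_eq[OF cb(6) cb(2)]
    proof (rule eventually_mono)
      fix t assume t: "t \<in> D b"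
      have "complex_of_real t \<notin> complex_of_real ` D b'"
        using t disj[OF cb(4) cb(5)] bb by auto
      moreover have "n < b'" "b' \<le> m" using Suc.prems bb by auto
      ultimately have IH: "nik_down e mu b' n (complex_of_real t) = E' * integral\<^sup>L (PiM J M') (downF b' c (complex_of_real t))"
        using Suc.IH[of b' "complex_of_real t"] unfolding E'_def J_def c_def bb by simp
      show "nik_down e mu b' n (complex_of_real t) / (w - complex_of_real t) = E' * (if t \<in> closure (D b) then inverse (w - complex_of_real t) * integral\<^sup>L (PiM J M') (downF b' c (complex_of_real t)) else 0)"
        using t closure_subset[of "D b"] unfolding IH by (auto simp: divide_inverse)
    qed
  qed
  also have "\<dots> = E' * integral\<^sup>L (PiM {c..b} M') (downF b c w)" unfolding L by simp
  finally have R: "(LINT t|mu b. nik_down e mu b' n (complex_of_real t) / (w - complex_of_real t)) = E' * integral\<^sup>L (PiM {c..b} M') (downF b c w)" .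
  have Pr: "(\<Prod>k\<in>{c..b}. complex_of_real (e k)) = complex_of_real (e b) * E'"
    unfolding E'_def bb using cb by (simp add: bb)
  have bm: "b - Suc 0 = b'" using bb by simp
  show ?case unfolding c_def[symmetric] by (simp add: cauchy_tr_def bm R Pr)
qed


lemma upF_cong: "a \<le> b \<Longrightarrow> (\<And>k. k \<in> {a..b} \<Longrightarrow> x k = y k) \<Longrightarrow> upF a b w x = upF a b w y"
  unfolding upF_def by (intro if_cong arg_cong2[where f="(*)"] prod.cong) auto

lemma downF_cong: "c \<le> b \<Longrightarrow> (\<And>k. k \<in> {c..b} \<Longrightarrow> x k = y k) \<Longrightarrow> downF b c w x = downF b c w y"
  unfolding downF_def by (intro if_cong arg_cong2[where f="(*)"] prod.cong) auto

lemma main_nik: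
  assumes j: "2 \<le> j" "j \<le> m" and z: "z \<notin> complex_of_real ` (D 1 \<union> D j)"
  shows "s_hat e mu 1 j z
         + (\<Sum>i=1..j-1. (-1::complex) ^ (j - i) * s_hat e mu 1 i z * s_hat e mu j (i + 1) z)
         + (-1::complex) ^ j * s_hat e mu j 1 z = 0"
proof -
  interpret product_sigma_finite M' by (rule psf)
  have z1: "z \<notin> complex_of_real ` D 1" and zj: "z \<notin> complex_of_real ` D j" using z by auto
  define E where "E = (\<Prod>k\<in>{1..j}. complex_of_real (e k))"
  define PI where "PI = PiM {1..j} M'"
  define U where "U i x = upF 1 i z x" for i x
  define V where "V i x = downF j i z x" for i x
  have mU: "U i \<in> borel_measurable PI" if "1 \<le> i" "i \<le> j" for i
    using meas_upF[where f="\<lambda>_. z" and g="\<lambda>x. x" and N=PI and I="{1..j}" and a=1 and b=i] that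
    unfolding U_def PI_def by simp
  have mV: "V i \<in> borel_measurable PI" if "1 \<le> i" "i \<le> j" for i
    using meas_downF[where f="\<lambda>_. z" and g="\<lambda>x. x" and N=PI and I="{1..j}" and c=i and b=j] that
    unfolding V_def PI_def by simp
  have bU: "\<exists>B. \<forall>x. norm (U i x) \<le> B" if "1 \<le> i" "i \<le> j" for i
    using bound_upF[of 1 i z] that j z1 unfolding U_def by auto
  have bV: "\<exists>B. \<forall>x. norm (V i x) \<le> B" if "1 \<le> i" "i \<le> j" for i
    using bound_downF[of i j z] that j zj unfolding V_def by auto
  have intU: "integrable PI (U j)"
  proof -
    obtain B where "\<forall>x. norm (U j x) \<le> B" using bU[of j] j by auto
    then show ?thesis unfolding PI_def by (intro integ[where B=B]) (use mU[of j] j in \<open>auto simp: PI_def\<close>)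
  qed
  have intV: "integrable PI (V 1)"
  proof -
    obtain B where "\<forall>x. norm (V 1 x) \<le> B" using bV[of 1] j by auto
    then show ?thesis unfolding PI_def by (intro integ[where B=B]) (use mV[of 1] j in \<open>auto simp: PI_def\<close>)
  qed
  have intUV: "integrable PI (\<lambda>x. U i x * V (Suc i) x)" if i: "1 \<le> i" "i < j" for i
  proof -
    obtain B1 where B1: "\<forall>x. norm (U i x) \<le> B1" using bU[of i] i by auto
    obtain B2 where B2: "\<forall>x. norm (V (Suc i) x) \<le> B2" using bV[of "Suc i"] i by auto
    have "norm (U i x * V (Suc i) x) \<le> B1 * B2" for x
      unfolding norm_mult using B1 B2 by (intro mult_mono) (auto intro: order.trans[OF norm_ge_zero])
    moreover have "(\<lambda>x. U i x * V (Suc i) x) \<in> borel_measurable PI"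
    proof -
      have m1: "U i \<in> borel_measurable PI" using mU i by simp
      have m2: "V (Suc i) \<in> borel_measurable PI" using mV i by simp
      show ?thesis using borel_measurable_times[OF m1 m2] .
    qed
    ultimately show ?thesis unfolding PI_def by (intro integ[where B="B1*B2"]) (auto simp: PI_def)
  qed
  have R1: "s_hat e mu 1 j z = E * integral\<^sup>L PI (U j)"
    using rep_up[of 1 "j - 1" z] j z1 unfolding s_hat_def E_def PI_def U_def by simp
  have R2: "s_hat e mu j 1 z = E * integral\<^sup>L PI (V 1)"
  proof -
    have "j - (j - 1) = 1" using j by simp
    then show ?thesis using rep_down[of "j - 1" j z] j zj unfolding s_hat_def E_def PI_def V_def by simp
  qed
  have R3: "s_hat e mu 1 i z * s_hat e mu j (i + 1) z = E * integral\<^sup>L PI (\<lambda>x. U i x * V (Suc i) x)"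
    if i: "i \<in> {1..j-1}" for i
  proof -
    have i1: "1 \<le> i" "i < j" using i j by auto
    have a: "s_hat e mu 1 i z = (\<Prod>k\<in>{1..i}. complex_of_real (e k)) * integral\<^sup>L (PiM {1..i} M') (U i)"
      using rep_up[of 1 "i - 1" z] i1 j z1 unfolding s_hat_def U_def by simp
    have b: "s_hat e mu j (i + 1) z = (\<Prod>k\<in>{Suc i..j}. complex_of_real (e k)) * integral\<^sup>L (PiM {Suc i..j} M') (V (Suc i))"
    proof -
      have "s_hat e mu j (i + 1) z = nik_down e mu j (j - Suc i) z"
        unfolding s_hat_def using i1 by (cases "j = Suc i") auto
      also have "\<dots> = (\<Prod>k\<in>{j - (j - Suc i)..j}. complex_of_real (e k)) * integral\<^sup>L (PiM {j - (j - Suc i)..j} M') (downF j (j - (j - Suc i)) z)"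
        by (rule rep_down) (use i1 j zj in auto)
      also have "j - (j - Suc i) = Suc i" using i1 by simp
      finally show ?thesis unfolding V_def by simp
    qed
    have un: "{1..j} = {1..i} \<union> {Suc i..j}" and dj: "{1..i} \<inter> {Suc i..j} = {}" using i1 by auto
    have Eq: "E = (\<Prod>k\<in>{1..i}. complex_of_real (e k)) * (\<Prod>k\<in>{Suc i..j}. complex_of_real (e k))"
      unfolding E_def un by (rule prod.union_disjoint) (use dj in auto)
    have "integral\<^sup>L PI (\<lambda>x. U i x * V (Suc i) x)
        = (\<integral>x. (\<integral>y. U i (merge {1..i} {Suc i..j} (x, y)) * V (Suc i) (merge {1..i} {Suc i..j} (x, y)) \<partial>PiM {Suc i..j} M') \<partial>PiM {1..i} M')"
      using product_integral_fold[OF dj, of "\<lambda>x. U i x * V (Suc i) x"] intUV[OF i1] unfolding PI_def un by simp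
    also have "\<dots> = (\<integral>x. (\<integral>y. U i x * V (Suc i) y \<partial>PiM {Suc i..j} M') \<partial>PiM {1..i} M')"
    proof -
      have eq: "U i (merge {1..i} {Suc i..j} (x, y)) * V (Suc i) (merge {1..i} {Suc i..j} (x, y)) = U i x * V (Suc i) y" for x y
      proof -
        have "U i (merge {1..i} {Suc i..j} (x, y)) = U i x"
          unfolding U_def using i1 by (intro upF_cong) (auto simp: merge_def)
        moreover have "V (Suc i) (merge {1..i} {Suc i..j} (x, y)) = V (Suc i) y"
          unfolding V_def using i1 by (intro downF_cong) (auto simp: merge_def)
        ultimately show ?thesis by simp
      qed
      show ?thesis by (simp only: eq)
    qed
    also have "\<dots> = integral\<^sup>L (PiM {1..i} M') (U i) * integral\<^sup>L (PiM {Suc i..j} M') (V (Suc i))"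
      by simp
    finally show ?thesis unfolding a b Eq by simp
  qed
  have pw: "U j x + (\<Sum>i=1..j-1. (-1)^(j-i) * (U i x * V (Suc i) x)) + (-1)^j * V 1 x = 0" for x
  proof (cases "\<forall>k\<in>{1..j}. x k \<in> D k")
    case True
    have cl: "\<forall>k\<in>{a..b}. x k \<in> closure (D k)" if "1 \<le> a" "b \<le> j" for a b
      using True that closure_subset by fastforce
    have Ueq: "U i x = inverse (z - complex_of_real (x 1)) * (\<Prod>k\<in>{1..<i}. inverse (complex_of_real (x k - x (Suc k))))"
      if "i \<le> j" for i unfolding U_def upF_def using cl[of 1 i] that by simp
    have Veq: "V i x = inverse (z - complex_of_real (x j)) * (\<Prod>k\<in>{i..<j}. inverse (complex_of_real (x (Suc k) - x k)))"
      if "1 \<le> i" for i unfolding V_def downF_def using cl[of i j] that by simp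
    have dk: "x k \<noteq> x (Suc k)" if "1 \<le> k" "k < j" for k
      using True that disj[of k] j by fastforce
    have x1: "z \<noteq> complex_of_real (x 1)" using True z1 j by auto
    have xj: "z \<noteq> complex_of_real (x j)" using True zj j by auto
    have S: "(\<Sum>i=1..j-1. (-1)^(j-i) * (U i x * V (Suc i) x)) = (\<Sum>i=1..j-1. (-1)^(j-i) * (inverse (z - complex_of_real (x 1)) * (\<Prod>k\<in>{1..<i}. inverse (complex_of_real (x k - x (Suc k)))))
         * (inverse (z - complex_of_real (x j)) * (\<Prod>k\<in>{i+1..<j}. inverse (complex_of_real (x (Suc k) - x k)))))"
    proof (rule sum.cong[OF refl])
      fix i assume "i \<in> {1..j-1}"
      then have "i \<le> j" "1 \<le> Suc i" by auto
      then show "(-1)^(j-i) * (U i x * V (Suc i) x) = (-1)^(j-i) * (inverse (z - complex_of_real (x 1)) * (\<Prod>k\<in>{1..<i}. inverse (complex_of_real (x k - x (Suc k)))))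
         * (inverse (z - complex_of_real (x j)) * (\<Prod>k\<in>{i+1..<j}. inverse (complex_of_real (x (Suc k) - x k))))"
        using Ueq Veq by (simp add: mult.assoc)
    qed
    show ?thesis unfolding S Ueq[OF order.refl] Veq[OF order.refl]
      using alg[of j x z] j dk x1 xj by simp
  next
    case False
    then obtain k0 where k0: "k0 \<in> {1..j}" "x k0 \<notin> D k0" by auto
    have nk0: "x k0 \<notin> closure (D k0)" using k0 Dclosed[of k0] j by auto
    have U0: "U i x = 0" if "k0 \<le> i" for i unfolding U_def upF_def using nk0 k0 that by auto
    have V0: "V i x = 0" if "i \<le> k0" for i unfolding V_def downF_def using nk0 k0 that by auto
    have "(\<Sum>i=1..j-1. (-1)^(j-i) * (U i x * V (Suc i) x)) = 0"
    proof (rule sum.neutral, rule ballI)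
      fix i assume "i \<in> {1..j-1}"
      show "(-1)^(j-i) * (U i x * V (Suc i) x) = 0"
      proof (cases "k0 \<le> i")
        case True then show ?thesis using U0 by simp
      next
        case False then show ?thesis using V0[of "Suc i"] by simp
      qed
    qed
    then show ?thesis using U0[of j] V0[of 1] k0 by simp
  qed
  have "s_hat e mu 1 j z
         + (\<Sum>i=1..j-1. (-1::complex) ^ (j - i) * s_hat e mu 1 i z * s_hat e mu j (i + 1) z)
         + (-1::complex) ^ j * s_hat e mu j 1 z
      = E * (integral\<^sup>L PI (U j) + (\<Sum>i=1..j-1. (-1)^(j-i) * integral\<^sup>L PI (\<lambda>x. U i x * V (Suc i) x)) + (-1)^j * integral\<^sup>L PI (V 1))"
  proof -
    have "(\<Sum>i=1..j-1. (-1::complex) ^ (j - i) * s_hat e mu 1 i z * s_hat e mu j (i + 1) z)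
        = (\<Sum>i=1..j-1. E * ((-1)^(j-i) * integral\<^sup>L PI (\<lambda>x. U i x * V (Suc i) x)))"
    proof (rule sum.cong[OF refl])
      fix i assume i: "i \<in> {1..j-1}"
      have "(-1::complex)^(j-i) * s_hat e mu 1 i z * s_hat e mu j (i+1) z = (-1)^(j-i) * (s_hat e mu 1 i z * s_hat e mu j (i+1) z)"
        by (simp only: mult.assoc)
      also have "\<dots> = (-1)^(j-i) * (E * integral\<^sup>L PI (\<lambda>x. U i x * V (Suc i) x))"
        by (simp only: R3[OF i])
      also have "\<dots> = E * ((-1)^(j-i) * integral\<^sup>L PI (\<lambda>x. U i x * V (Suc i) x))"
        by (simp only: mult.left_commute)
      finally show "(-1::complex)^(j-i) * s_hat e mu 1 i z * s_hat e mu j (i+1) z = E * ((-1)^(j-i) * integral\<^sup>L PI (\<lambda>x. U i x * V (Suc i) x))" .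
    qed
    then show ?thesis unfolding R1 R2 by (simp add: sum_distrib_left[symmetric] algebra_simps)
  qed
  also have "integral\<^sup>L PI (U j) + (\<Sum>i=1..j-1. (-1)^(j-i) * integral\<^sup>L PI (\<lambda>x. U i x * V (Suc i) x)) + (-1)^j * integral\<^sup>L PI (V 1)
      = integral\<^sup>L PI (\<lambda>x. U j x + (\<Sum>i=1..j-1. (-1)^(j-i) * (U i x * V (Suc i) x)) + (-1)^j * V 1 x)"
  proof -
    have intS: "integrable PI (\<lambda>x. \<Sum>i=1..j-1. (-1)^(j-i) * (U i x * V (Suc i) x))"
    proof (rule Bochner_Integration.integrable_sum)
      fix i assume "i \<in> {1..j-1}"
      then have i1: "1 \<le> i" "i < j" by auto
      show "integrable PI (\<lambda>x. (-1)^(j-i) * (U i x * V (Suc i) x))"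
        by (rule Bochner_Integration.integrable_mult_right) (rule intUV[OF i1])
    qed
    have "integral\<^sup>L PI (\<lambda>x. \<Sum>i=1..j-1. (-1)^(j-i) * (U i x * V (Suc i) x)) = (\<Sum>i=1..j-1. (-1)^(j-i) * integral\<^sup>L PI (\<lambda>x. U i x * V (Suc i) x))"
    proof -
      have "integral\<^sup>L PI (\<lambda>x. \<Sum>i=1..j-1. (-1)^(j-i) * (U i x * V (Suc i) x)) = (\<Sum>i=1..j-1. integral\<^sup>L PI (\<lambda>x. (-1)^(j-i) * (U i x * V (Suc i) x)))"
      proof (rule Bochner_Integration.integral_sum)
        fix i assume "i \<in> {1..j-1}"
        then have i1: "1 \<le> i" "i < j" by auto
        show "integrable PI (\<lambda>x. (-1)^(j-i) * (U i x * V (Suc i) x))"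
          by (rule Bochner_Integration.integrable_mult_right) (rule intUV[OF i1])
      qed
      then show ?thesis by simp
    qed
    moreover have "integral\<^sup>L PI (\<lambda>x. U j x + (\<Sum>i=1..j-1. (-1)^(j-i) * (U i x * V (Suc i) x)) + (-1)^j * V 1 x)
       = integral\<^sup>L PI (U j) + integral\<^sup>L PI (\<lambda>x. \<Sum>i=1..j-1. (-1)^(j-i) * (U i x * V (Suc i) x)) + integral\<^sup>L PI (\<lambda>x. (-1)^j * V 1 x)"
      using intU intS intV by (simp add: integral_add)
    ultimately show ?thesis by simp
  qed
  also have "\<dots> = 0" unfolding pw by simp
  finally show ?thesis by simp
qed

end

theorem lemma6:
  fixes m :: nat and D :: "nat \<Rightarrow> real set"
    and e :: "nat \<Rightarrow> real" and mu :: "nat \<Rightarrow> real measure"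
  assumes intervals: "\<And>j. 1 \<le> j \<Longrightarrow> j \<le> m \<Longrightarrow> is_interval (D j) \<and> bounded (D j)"
    and disj: "\<And>j. 1 \<le> j \<Longrightarrow> j < m \<Longrightarrow> D j \<inter> D (Suc j) = {}"
    and sign: "\<And>j. 1 \<le> j \<Longrightarrow> j \<le> m \<Longrightarrow> e j = 1 \<or> e j = -1"
    and classM: "\<And>j. 1 \<le> j \<Longrightarrow> j \<le> m \<Longrightarrow> in_class_M (mu j) (D j)"
    and j: "2 \<le> j" "j \<le> m"
    and z: "z \<notin> complex_of_real ` (D 1 \<union> D j)"
  shows "s_hat e mu 1 j z
         + (\<Sum>i=1..j-1. (-1::complex) ^ (j - i) * s_hat e mu 1 i z * s_hat e mu j (i + 1) z)
         + (-1::complex) ^ j * s_hat e mu j 1 z = 0"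
proof -
  interpret nik m D e mu by unfold_locales (use disj classM in auto)
  show ?thesis by (rule main_nik[OF j z])
qed

end
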